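(* Let $R$ be an associative ring with identity and $a,b,c,d\in R$ such that both $a^{\|(b,c)}$ and $d^{\|(b,c)}$ exist. Then the following are equivalent: (i) $ad$ has a $(b,c)$-inverse and $(ad)^{\|(b,c)}=d^{\|(b,c)}a^{\|(b,c)}$; (ii) $d^{\|(b,c)}=d^{\|(b,c)}add^{\|(b,c)}a^{\|(b,c)}=d^{\|(b,c)}a^{\|(b,c)}add^{\|(b,c)}$; (iii) $a^{\|(b,c)}=a^{\|(b,c)}add^{\|(b,c)}a^{\|(b,c)}=d^{\|(b,c)}a^{\|(b,c)}ada^{\|(b,c)}$.
   Context: For $a,b,c\in R$, $a$ is $(b,c)$-invertible if there exists $y\in R$ with $y\in (bRy)\cap(yRc)$, $yab=b$ and $cay=c$; such $y$ is unique and denoted $a^{\|(b,c)}$. *)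

theory Defs
  imports Main
begin

definition is_bc_inverse :: "'a::ring_1 \<Rightarrow> 'a \<Rightarrow> 'a \<Rightarrow> 'a \<Rightarrow> bool" where
  "is_bc_inverse a b c y \<longleftrightarrow>
     (\<exists>r. y = b * r * y) \<and> (\<exists>s. y = y * s * c) \<and> y * a * b = b \<and> c * a * y = c"

definition bc_invertible :: "'a::ring_1 \<Rightarrow> 'a \<Rightarrow> 'a \<Rightarrow> bool" where
  "bc_invertible a b c \<longleftrightarrow> (\<exists>y. is_bc_inverse a b c y)"

definition bc_inv :: "'a::ring_1 \<Rightarrow> 'a \<Rightarrow> 'a \<Rightarrow> 'a" where
  "bc_inv a b c = (THE y. is_bc_inverse a b c y)"

end

theory Submission
  imports Defs
begin

lemma bc_unique:
  fixes a b c :: "'r::ring_1"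
  assumes "is_bc_inverse a b c y1" "is_bc_inverse a b c y2"
  shows "y1 = y2"
proof -
  obtain r1 where r1: "y1 = b * r1 * y1" using assms(1) unfolding is_bc_inverse_def by blast
  obtain s2 where s2: "y2 = y2 * s2 * c" using assms(2) unfolding is_bc_inverse_def by blast
  have h1: "y2 * a * b = b" "c * a * y1 = c" using assms unfolding is_bc_inverse_def by auto
  have "y1 = y2 * a * b * r1 * y1" using r1 h1 by (simp add: mult.assoc)
  also have "\<dots> = y2 * a * y1" using r1 by (simp add: mult.assoc)
  also have "\<dots> = (y2 * s2 * c) * a * y1" using s2 by simp
  also have "\<dots> = y2 * s2 * (c * a * y1)" by (simp add: mult.assoc)
  also have "\<dots> = y2" using h1 s2 by simp
  finally show ?thesis .
qed

lemma bc_inv_is: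
  assumes "bc_invertible a b c"
  shows "is_bc_inverse a b c (bc_inv a b c)"
  using assms bc_unique unfolding bc_invertible_def bc_inv_def by (metis theI)

lemma bc_inv_eq:
  assumes "is_bc_inverse a b c z"
  shows "bc_inv a b c = z"
  using assms bc_unique unfolding bc_inv_def by blast

lemma key:
  fixes a b c d x y :: "'r::ring_1"
  assumes x: "is_bc_inverse a b c x" and y: "is_bc_inverse d b c y"
  shows "(is_bc_inverse (a*d) b c (y*x) \<longleftrightarrow> (y*x*(a*d)*b = b \<and> c*(a*d)*(y*x) = c))"
    and "(y*x*(a*d)*b = b \<and> c*(a*d)*(y*x) = c) \<longleftrightarrow> (y = y*a*d*y*x \<and> y = y*x*a*d*y)"
    and "(y*x*(a*d)*b = b \<and> c*(a*d)*(y*x) = c) \<longleftrightarrow> (x = x*a*d*y*x \<and> x = y*x*a*d*x)"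
proof -
  obtain rx where rx: "x = b * rx * x" using x unfolding is_bc_inverse_def by blast
  obtain sx where sx: "x = x * sx * c" using x unfolding is_bc_inverse_def by blast
  obtain ry where ry: "y = b * ry * y" using y unfolding is_bc_inverse_def by blast
  obtain sy where sy: "y = y * sy * c" using y unfolding is_bc_inverse_def by blast
  have xab: "x * a * b = b" and cax: "c * a * x = c" using x unfolding is_bc_inverse_def by auto
  have ydb: "y * d * b = b" and cdy: "c * d * y = c" using y unfolding is_bc_inverse_def by auto
  show "(is_bc_inverse (a*d) b c (y*x) \<longleftrightarrow> (y*x*(a*d)*b = b \<and> c*(a*d)*(y*x) = c))"
  proof
    assume "is_bc_inverse (a*d) b c (y*x)"
    then show "y*x*(a*d)*b = b \<and> c*(a*d)*(y*x) = c" unfolding is_bc_inverse_def by auto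
  next
    assume h: "y*x*(a*d)*b = b \<and> c*(a*d)*(y*x) = c"
    let ?z = "y*x"
    have zb: "?z = b * (ry * y * x)" using ry by (metis mult.assoc)
    have zc: "?z = (y * x * sx) * c" using sx by (metis mult.assoc)
    have "?z * (a*d) * ?z = ?z" using h zb by (metis mult.assoc)
    then have "?z = b * (ry * y * x * (a*d)) * ?z" "?z = ?z * ((a*d) * (y * x * sx)) * c"
      using zb zc by (metis mult.assoc)+
    then show "is_bc_inverse (a*d) b c (y*x)" using h unfolding is_bc_inverse_def by blast
  qed
  show "(y*x*(a*d)*b = b \<and> c*(a*d)*(y*x) = c) \<longleftrightarrow> (y = y*a*d*y*x \<and> y = y*x*a*d*y)"
  proof
    assume h: "y*x*(a*d)*b = b \<and> c*(a*d)*(y*x) = c"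
    have "y*a*d*y*x = (y * sy * c)*a*d*y*x" using sy by simp
    also have "\<dots> = y * sy * (c*(a*d)*(y*x))" by (simp add: mult.assoc)
    also have "\<dots> = y" using h sy by simp
    finally have 1: "y = y*a*d*y*x" by simp
    have "y*x*a*d*y = y*x*a*d*(b * ry * y)" using ry by simp
    also have "\<dots> = (y*x*(a*d)*b) * ry * y" by (simp add: mult.assoc)
    also have "\<dots> = y" using h ry by simp
    finally show "y = y*a*d*y*x \<and> y = y*x*a*d*y" using 1 by simp
  next
    assume h: "y = y*a*d*y*x \<and> y = y*x*a*d*y"
    have "c*(a*d)*(y*x) = (c * d * y)*a*d*y*x" using cdy by (simp add: mult.assoc)
    also have "\<dots> = c * d * (y*a*d*y*x)" by (simp add: mult.assoc)
    also have "\<dots> = c" using h cdy by simp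
    finally have 1: "c*(a*d)*(y*x) = c" .
    have "y*x*(a*d)*b = y*x*a*d*(y * d * b)" using ydb by (simp add: mult.assoc)
    also have "\<dots> = (y*x*a*d*y) * d * b" by (simp add: mult.assoc)
    also have "\<dots> = b" using h ydb by simp
    finally show "y*x*(a*d)*b = b \<and> c*(a*d)*(y*x) = c" using 1 by simp
  qed
  show "(y*x*(a*d)*b = b \<and> c*(a*d)*(y*x) = c) \<longleftrightarrow> (x = x*a*d*y*x \<and> x = y*x*a*d*x)"
  proof
    assume h: "y*x*(a*d)*b = b \<and> c*(a*d)*(y*x) = c"
    have "x*a*d*y*x = (x * sx * c)*a*d*y*x" using sx by simp
    also have "\<dots> = x * sx * (c*(a*d)*(y*x))" by (simp add: mult.assoc)
    also have "\<dots> = x" using h sx by simp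
    finally have 1: "x = x*a*d*y*x" by simp
    have "y*x*a*d*x = y*x*a*d*(b * rx * x)" using rx by simp
    also have "\<dots> = (y*x*(a*d)*b) * rx * x" by (simp add: mult.assoc)
    also have "\<dots> = x" using h rx by simp
    finally show "x = x*a*d*y*x \<and> x = y*x*a*d*x" using 1 by simp
  next
    assume h: "x = x*a*d*y*x \<and> x = y*x*a*d*x"
    have "c*(a*d)*(y*x) = (c * a * x)*a*d*y*x" using cax by (simp add: mult.assoc)
    also have "\<dots> = c * a * (x*a*d*y*x)" by (simp add: mult.assoc)
    also have "\<dots> = c" using h cax by simp
    finally have 1: "c*(a*d)*(y*x) = c" .
    have "y*x*(a*d)*b = y*x*a*d*(x * a * b)" using xab by (simp add: mult.assoc)
    also have "\<dots> = (y*x*a*d*x) * a * b" by (simp add: mult.assoc)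
    also have "\<dots> = b" using h xab by simp
    finally show "y*x*(a*d)*b = b \<and> c*(a*d)*(y*x) = c" using 1 by simp
  qed
qed

theorem theorem4p4:
  fixes a b c d :: "'r::ring_1"
  assumes "bc_invertible a b c" and "bc_invertible d b c"
  shows "((bc_invertible (a * d) b c \<and> bc_inv (a * d) b c = bc_inv d b c * bc_inv a b c)
          \<longleftrightarrow> (bc_inv d b c = bc_inv d b c * a * d * bc_inv d b c * bc_inv a b c
               \<and> bc_inv d b c * a * d * bc_inv d b c * bc_inv a b c
                 = bc_inv d b c * bc_inv a b c * a * d * bc_inv d b c))
       \<and> ((bc_invertible (a * d) b c \<and> bc_inv (a * d) b c = bc_inv d b c * bc_inv a b c)
          \<longleftrightarrow> (bc_inv a b c = bc_inv a b c * a * d * bc_inv d b c * bc_inv a b c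
               \<and> bc_inv a b c * a * d * bc_inv d b c * bc_inv a b c
                 = bc_inv d b c * bc_inv a b c * a * d * bc_inv a b c))"
proof -
  define x where "x = bc_inv a b c"
  define y where "y = bc_inv d b c"
  have X: "is_bc_inverse a b c x" using assms(1) bc_inv_is x_def by blast
  have Y: "is_bc_inverse d b c y" using assms(2) bc_inv_is y_def by blast
  have I: "(bc_invertible (a * d) b c \<and> bc_inv (a * d) b c = y * x) \<longleftrightarrow> is_bc_inverse (a*d) b c (y*x)"
    using bc_inv_eq bc_inv_is unfolding bc_invertible_def by metis
  note K = key[OF X Y]
  have "(y = y*a*d*y*x \<and> y*a*d*y*x = y*x*a*d*y) \<longleftrightarrow> (y = y*a*d*y*x \<and> y = y*x*a*d*y)" by auto
  moreover have "(x = x*a*d*y*x \<and> x*a*d*y*x = y*x*a*d*x) \<longleftrightarrow> (x = x*a*d*y*x \<and> x = y*x*a*d*x)" by auto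
  ultimately show ?thesis using I K unfolding x_def[symmetric] y_def[symmetric] by blast
qed

end
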